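(* Let $G$ be a non-discrete lcsc group and $M$ a local $G$-space. Then $\mathrm{vol}_M$ has no atoms.
   Context: An lcsc group is a locally compact second countable group; fix a Haar measure $\lambda$ on $G$. A local $G$-space is an lcsc space $M$ with a continuous map $\alpha:\mathrm{dom}(\alpha)\to M$, $\mathrm{dom}(\alpha)\subset G\times M$ open, written $g.p=\alpha(g,p)$, such that for all $p\in M$: (1) $(1_G,p)\in\mathrm{dom}(\alpha)$ and $1_G.p=p$; (2) if $(g,p)\in\mathrm{dom}(\alpha)$ then $(g^{-1},g.p)\in\mathrm{dom}(\alpha)$ and $g^{-1}.(g.p)=p$; (3) if $(h,p),(g,h.p),(gh,p)\in\mathrm{dom}(\alpha)$ then $gh.p=g.(h.p)$; (4) there is an open neighborhood $O_p$ of $1_G$ with $O_p\times\{p\}\subset\mathrm{dom}(\alpha)$ such that $g\mapsto g.p$ is a homeomorphism of $O_p$ onto an open neighborhood of $p$. A chart centered at $p$ is a homeomorphism $f_p$ from an open neighborhood of $p$ in $M$ onto an open neighborhood $\mathrm{rng}(f_p)$ of $1_G$ with $f_p(g.p)=g$ for all $g\in\mathrm{rng}(f_p)$. The canonical measure $\mathrm{vol}_M$ is the unique Radon measure on $M$ with $\mathrm{vol}_M(K)=\lambda(f_p(K))$ for every chart $f_p$ and Borel $K\subset\mathrm{dom}(f_p)$ (its existence and uniqueness is a known fact). *)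

theory Defs
  imports "HOL-Analysis.Analysis"
begin

text \<open>An lcsc group is a type 'g of class topological_group_add
(a topological group, written additively, NOT assumed commutative) which is
Hausdorff, second countable and locally compact. An lcsc space is a type of
class t2_space + second_countable_topology which is locally compact.\<close>

definition lcsc_space :: "'a::topological_space itself \<Rightarrow> bool" where
  "lcsc_space _ \<longleftrightarrow> locally_compact_space (euclidean :: 'a topology)"

definition radon_measure :: "'a::topological_space measure \<Rightarrow> bool" where
  "radon_measure \<mu> \<longleftrightarrow>
     sets \<mu> = sets borel \<and>
     (\<forall>K. compact K \<longrightarrow> emeasure \<mu> K < \<infinity>) \<and>
     (\<forall>A\<in>sets borel. emeasure \<mu> A = (INF U\<in>{U. open U \<and> A \<subseteq> U}. emeasure \<mu> U)) \<and>
     (\<forall>U. open U \<longrightarrow> emeasure \<mu> U = (SUP K\<in>{K. compact K \<and> K \<subseteq> U}. emeasure \<mu> K))"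

definition haar_measure :: "'g::topological_group_add measure \<Rightarrow> bool" where
  "haar_measure \<nu> \<longleftrightarrow> radon_measure \<nu> \<and> emeasure \<nu> UNIV \<noteq> 0 \<and>
     (\<forall>g A. A \<in> sets borel \<longrightarrow> emeasure \<nu> ((\<lambda>x. g + x) ` A) = emeasure \<nu> A)"

text \<open>Local G-space: partial action act defined on the open set D \<subseteq> G \<times> M;
g.p = act g p.  Group identity is 0, product g h is g + h, inverse is -g.\<close>
definition local_G_space :: "('g::topological_group_add \<times> 'm::topological_space) set
     \<Rightarrow> ('g \<Rightarrow> 'm \<Rightarrow> 'm) \<Rightarrow> bool" where
  "local_G_space D act \<longleftrightarrow>
     open D \<and> continuous_on D (\<lambda>(g, p). act g p) \<and>
     (\<forall>p. (0, p) \<in> D \<and> act 0 p = p) \<and>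
     (\<forall>g p. (g, p) \<in> D \<longrightarrow> (- g, act g p) \<in> D \<and> act (- g) (act g p) = p) \<and>
     (\<forall>g h p. (h, p) \<in> D \<and> (g, act h p) \<in> D \<and> (g + h, p) \<in> D
              \<longrightarrow> act (g + h) p = act g (act h p)) \<and>
     (\<forall>p. \<exists>W. open W \<and> 0 \<in> W \<and> W \<times> {p} \<subseteq> D \<and>
          (\<exists>V. open V \<and> p \<in> V \<and> (\<exists>h. homeomorphism W V (\<lambda>g. act g p) h)))"

definition chart_centered :: "('g::topological_group_add \<times> 'm::topological_space) set
     \<Rightarrow> ('g \<Rightarrow> 'm \<Rightarrow> 'm) \<Rightarrow> 'm \<Rightarrow> 'm set \<Rightarrow> ('m \<Rightarrow> 'g) \<Rightarrow> bool" where
  "chart_centered D act p U f \<longleftrightarrow>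
     open U \<and> p \<in> U \<and> open (f ` U) \<and> 0 \<in> f ` U \<and>
     (\<exists>h. homeomorphism U (f ` U) f h) \<and>
     (\<forall>g\<in>f ` U. (g, p) \<in> D \<and> act g p \<in> U \<and> f (act g p) = g)"

definition canonical_measure :: "'g::topological_group_add measure
     \<Rightarrow> ('g \<times> 'm::topological_space) set \<Rightarrow> ('g \<Rightarrow> 'm \<Rightarrow> 'm) \<Rightarrow> 'm measure \<Rightarrow> bool" where
  "canonical_measure \<nu> D act vol \<longleftrightarrow> radon_measure vol \<and>
     (\<forall>p U f K. chart_centered D act p U f \<and> K \<in> sets borel \<and> K \<subseteq> U
        \<longrightarrow> emeasure vol K = emeasure \<nu> (f ` K))"

end

theory Submission
  imports Defs
begin

lemma open_finite_imp_discrete: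
  fixes U :: "'g::{topological_group_add, t2_space} set"
  assumes "open U" "0 \<in> U" "finite U"
  shows "\<forall>x::'g. open {x}"
proof -
  have "closed (U - {0})" using assms(3) by (simp add: finite_imp_closed)
  then have o0: "open ({0::'g})"
  proof -
    have "{0::'g} = U - (U - {0})" using assms(2) by auto
    then show ?thesis using open_Diff[OF assms(1) \<open>closed (U - {0})\<close>] by simp
  qed
  show ?thesis
  proof
    fix x :: 'g
    have "(\<lambda>y. - x + y) -` {0} = {x}"
      by (auto, metis add_minus_cancel add.right_neutral)
    moreover have "open ((\<lambda>y. - x + y) -` {0})"
      by (rule continuous_open_vimage) (use o0 in \<open>auto intro: continuous_intros\<close>)
    ultimately show "open {x}" by simp
  qed
qed

lemma haar_no_atom0:
  fixes \<nu> :: "'g::{topological_group_add, t2_space, second_countable_topology} measure"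
  assumes "lcsc_space TYPE('g)"
    and "\<not> (\<forall>x::'g. open {x})"
    and "haar_measure \<nu>"
  shows "emeasure \<nu> {0} = 0"
proof (rule ccontr)
  assume c: "emeasure \<nu> {0} \<noteq> 0"
  have rad: "radon_measure \<nu>" using assms(3) unfolding haar_measure_def by simp
  have sets: "sets \<nu> = sets borel" using rad unfolding radon_measure_def by simp
  have inv: "\<And>x. emeasure \<nu> {x} = emeasure \<nu> {0}"
  proof -
    fix x :: 'g
    have "{0::'g} \<in> sets borel" by simp
    then have "emeasure \<nu> ((\<lambda>y. x + y) ` {0}) = emeasure \<nu> {0}"
      using assms(3) unfolding haar_measure_def by blast
    then show "emeasure \<nu> {x} = emeasure \<nu> {0}" by simp
  qed
  have "\<exists>U. open U \<and> (\<exists>K. compact K \<and> (0::'g) \<in> U \<and> U \<subseteq> K)"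
    using assms(1) unfolding lcsc_space_def locally_compact_space_def by auto
  then obtain U K where UK: "open U" "compact K" "(0::'g) \<in> U" "U \<subseteq> K"
    by blast
  have Kfin: "emeasure \<nu> K < \<infinity>" using rad UK(2) unfolding radon_measure_def by simp
  have Kset: "K \<in> sets \<nu>" using sets UK(2) by (simp add: compact_imp_closed)
  have Uinf: "infinite U" using open_finite_imp_discrete[OF UK(1) UK(3)] assms(2) by blast
  have bound: "of_nat n * emeasure \<nu> {0} \<le> emeasure \<nu> K" for n
  proof -
    obtain F where F: "F \<subseteq> U" "finite F" "card F = n"
      using infinite_arbitrarily_large[OF Uinf] by blast
    have "emeasure \<nu> F = (\<Sum>x\<in>F. emeasure \<nu> {x})"
      by (rule emeasure_eq_sum_singleton) (use F sets in auto)
    also have "\<dots> = (\<Sum>x\<in>F. emeasure \<nu> {0})" by (rule sum.cong) (rule refl, rule inv)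
    also have "\<dots> = of_nat n * emeasure \<nu> {0}" using F(3) by simp
    finally have "emeasure \<nu> F = of_nat n * emeasure \<nu> {0}" .
    moreover have "emeasure \<nu> F \<le> emeasure \<nu> K"
      by (rule emeasure_mono) (use F UK Kset in auto)
    ultimately show ?thesis by simp
  qed
  obtain k where k: "emeasure \<nu> K = ennreal k" "k \<ge> 0" using Kfin
    by (cases "emeasure \<nu> K") auto
  have "emeasure \<nu> {0} \<le> emeasure \<nu> K" using bound[of 1] by simp
  then obtain c' where c': "emeasure \<nu> {0} = ennreal c'" "c' \<ge> 0" using Kfin
    by (cases "emeasure \<nu> {0}") auto
  have cpos: "c' > 0" using c c' by (auto simp: ennreal_eq_0_iff)
  obtain n :: nat where n: "real n > k / c'" using reals_Archimedean2 by blast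
  have "ennreal (real n * c') \<le> ennreal k" using bound[of n] k c'
    by (simp add: ennreal_mult' ennreal_of_nat_eq_real_of_nat)
  then have "real n * c' \<le> k" using k by (auto simp: ennreal_le_iff2)
  moreover have "real n * c' > k" using n cpos by (simp add: field_simps)
  ultimately show False by simp
qed

theorem lemma6p11:
  fixes \<nu> :: "'g::{topological_group_add, t2_space, second_countable_topology} measure"
    and D :: "('g \<times> 'm::{t2_space, second_countable_topology}) set"
    and act :: "'g \<Rightarrow> 'm \<Rightarrow> 'm"
    and vol :: "'m measure"
  assumes "lcsc_space TYPE('g)"
    and "lcsc_space TYPE('m)"
    and "\<not> (\<forall>x::'g. open {x})"
    and "haar_measure \<nu>"
    and "local_G_space D act"
    and "canonical_measure \<nu> D act vol"
  shows "\<forall>p. emeasure vol {p} = 0"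
proof
  fix p :: 'm
  obtain W V h where WV: "open W" "0 \<in> W" "W \<times> {p} \<subseteq> D" "open V" "p \<in> V"
      "homeomorphism W V (\<lambda>g. act g p) h"
    using assms(5) unfolding local_G_space_def by meson
  have act0: "act 0 p = p" using assms(5) unfolding local_G_space_def by simp
  have hV: "h ` V = W" using WV(6) by (simp add: homeomorphism_def)
  have hp: "h p = 0" using WV(6) WV(2) act0 unfolding homeomorphism_def by metis
  have chart: "chart_centered D act p V h"
    unfolding chart_centered_def hV
  proof (intro conjI)
    show "\<exists>k. homeomorphism V W h k" using WV(6) homeomorphism_symD by blast
    show "\<forall>g\<in>W. (g, p) \<in> D \<and> act g p \<in> V \<and> h (act g p) = g"
      using WV(3,6) unfolding homeomorphism_def by auto
  qed (use WV in auto)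
  have "emeasure vol {p} = emeasure \<nu> (h ` {p})"
    using assms(6) chart WV(5) unfolding canonical_measure_def by auto
  also have "\<dots> = emeasure \<nu> {0}" using hp by simp
  also have "\<dots> = 0" by (rule haar_no_atom0[OF assms(1) assms(3) assms(4)])
  finally show "emeasure vol {p} = 0" .
qed

end
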